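(* Let $X$ be a feasible solution of the General-Cost Convex Program and let $\alpha_i$ be the first arrival times produced by Continuous-Time Poisson Rounding from $X$. For any $\tau\ge 0$, $$\mathbf{E}\Big[\sum_{i:\,\alpha_i<\tau}c_i\Big]\le\tau.$$
   Context: Boxes $[n]$ with costs $c_i>0$. Write $x_+=\max\{x,0\}$. A feasible solution of the General-Cost Convex Program is a family of non-decreasing functions $X_i:[0,\infty)\to[0,1]$, $i\in[n]$, with $\sum_{i\in[n]}\big(X_i(t)-X_i((t-c_i)_+)\big)\le 1$ for all $t\ge 0$. Continuous-Time Poisson Rounding: let $\bar x_i(t)=\frac1t\int_0^t\big(X_i(t')-X_i((t'-c_i)_+)\big)\,dt'$. Independently for each box $i$, arrivals of box $i$ form a non-homogeneous Poisson process in time $\tau\ge 0$ with rate $\frac1{c_i}\bar x_i(\tau/2)$; $\alpha_i$ is the first arrival time of box $i$ ($\infty$ if none). *)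

theory Defs
  imports "HOL-Probability.Probability"
begin

text \<open>Boxes are indexed by {..<n} (the paper's [n]); costs c i > 0.\<close>

definition pos_part :: "real \<Rightarrow> real" where
  "pos_part x = max x 0"

definition gccp_feasible :: "nat \<Rightarrow> (nat \<Rightarrow> real) \<Rightarrow> (nat \<Rightarrow> real \<Rightarrow> real) \<Rightarrow> bool" where
  "gccp_feasible n c X \<longleftrightarrow>
     (\<forall>i<n. mono_on {0..} (X i) \<and> (\<forall>t\<ge>0. 0 \<le> X i t \<and> X i t \<le> 1)) \<and>
     (\<forall>t\<ge>0. (\<Sum>i<n. X i t - X i (pos_part (t - c i))) \<le> 1)"

definition xbar :: "(nat \<Rightarrow> real) \<Rightarrow> (nat \<Rightarrow> real \<Rightarrow> real) \<Rightarrow> nat \<Rightarrow> real \<Rightarrow> real" where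
  "xbar c X i t = (1 / t) * integral {0..t} (\<lambda>t'. X i t' - X i (pos_part (t' - c i)))"

definition cum_rate :: "(nat \<Rightarrow> real) \<Rightarrow> (nat \<Rightarrow> real \<Rightarrow> real) \<Rightarrow> nat \<Rightarrow> real \<Rightarrow> real" where
  "cum_rate c X i \<tau> = integral {0..\<tau>} (\<lambda>s. (1 / c i) * xbar c X i (s / 2))"

text \<open>alpha i (values in ereal, \<infinity> = no arrival) are independent random variables, each
  distributed as the first arrival time of a non-homogeneous Poisson process with the
  above rate: P(alpha_i > t) = exp(- cum_rate i t) for all t \<ge> 0.\<close>
definition poisson_rounding ::
  "'w measure \<Rightarrow> nat \<Rightarrow> (nat \<Rightarrow> real) \<Rightarrow> (nat \<Rightarrow> real \<Rightarrow> real) \<Rightarrow> (nat \<Rightarrow> 'w \<Rightarrow> ereal) \<Rightarrow> bool" where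
  "poisson_rounding M n c X \<alpha> \<longleftrightarrow>
     prob_space M \<and>
     prob_space.indep_vars M (\<lambda>_. borel) \<alpha> {..<n} \<and>
     (\<forall>i<n. \<forall>\<omega>\<in>space M. 0 \<le> \<alpha> i \<omega>) \<and>
     (\<forall>i<n. \<forall>t\<ge>0. measure M {\<omega>\<in>space M. ereal t < \<alpha> i \<omega>} = exp (- cum_rate c X i t))"

end

theory Submission
  imports Defs
begin

lemma integral_nonneg':
  fixes f :: "real \<Rightarrow> real"
  assumes "\<And>x. x \<in> S \<Longrightarrow> 0 \<le> f x"
  shows "0 \<le> integral S f"
proof (cases "f integrable_on S")
  case True then show ?thesis using assms integral_nonneg by blast
next
  case False then show ?thesis by (simp add: not_integrable_integral)
qed

lemma sum_integral_le:
  fixes f :: "nat \<Rightarrow> real \<Rightarrow> real"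
  assumes fin: "finite I" and nn: "\<And>i x. i \<in> I \<Longrightarrow> x \<in> S \<Longrightarrow> 0 \<le> f i x"
    and le: "\<And>x. x \<in> S \<Longrightarrow> (\<Sum>i\<in>I. f i x) \<le> g x" and gi: "g integrable_on S"
  shows "(\<Sum>i\<in>I. integral S (f i)) \<le> integral S g"
proof -
  define J where "J = {i\<in>I. f i integrable_on S}"
  have JI: "J \<subseteq> I" and fJ: "finite J" using fin by (auto simp: J_def)
  have "(\<Sum>i\<in>I. integral S (f i)) = (\<Sum>i\<in>J. integral S (f i))"
    by (rule sum.mono_neutral_right[OF fin JI]) (auto simp: J_def not_integrable_integral)
  also have "\<dots> = integral S (\<lambda>x. \<Sum>i\<in>J. f i x)"
    by (rule integral_sum[symmetric]) (use fJ in \<open>auto simp: J_def\<close>)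
  also have "\<dots> \<le> integral S g"
  proof (rule integral_le)
    show "(\<lambda>x. \<Sum>i\<in>J. f i x) integrable_on S"
      by (rule integrable_sum) (use fJ in \<open>auto simp: J_def\<close>)
    show "g integrable_on S" by fact
    fix x assume x: "x \<in> S"
    have "(\<Sum>i\<in>J. f i x) \<le> (\<Sum>i\<in>I. f i x)"
      by (rule sum_mono2[OF fin JI]) (use nn x in auto)
    also have "\<dots> \<le> g x" using le x .
    finally show "(\<Sum>i\<in>J. f i x) \<le> g x" .
  qed
  finally show ?thesis .
qed

lemma xbar_props:
  assumes c: "\<forall>i<n. c i > 0" and feas: "gccp_feasible n c X" and t: "t \<ge> 0"
  shows "\<forall>i<n. 0 \<le> xbar c X i t" and "(\<Sum>i<n. xbar c X i t) \<le> 1"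
proof -
  have g_nn: "0 \<le> X i x - X i (pos_part (x - c i))" if "i < n" "x \<in> {0..t}" for i x
  proof -
    have m: "mono_on {0..} (X i)" using feas that unfolding gccp_feasible_def by auto
    have "pos_part (x - c i) \<le> x" "0 \<le> pos_part (x - c i)"
      using c that unfolding pos_part_def by auto
    then show ?thesis using m that by (simp add: mono_onD)
  qed
  show "\<forall>i<n. 0 \<le> xbar c X i t"
  proof (intro allI impI)
    fix i assume i: "i < n"
    have "0 \<le> integral {0..t} (\<lambda>t'. X i t' - X i (pos_part (t' - c i)))"
      using g_nn[OF i] by (intro integral_nonneg') auto
    then show "0 \<le> xbar c X i t" using t unfolding xbar_def by simp
  qed
  show "(\<Sum>i<n. xbar c X i t) \<le> 1"
  proof (cases "t = 0")
    case True then show ?thesis by (simp add: xbar_def)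
  next
    case False
    then have tp: "t > 0" using t by simp
    have "(\<Sum>i<n. integral {0..t} (\<lambda>x. X i x - X i (pos_part (x - c i))))
        \<le> integral {0..t} (\<lambda>x. 1)"
    proof (rule sum_integral_le)
      show "\<And>x. x \<in> {0..t} \<Longrightarrow> (\<Sum>i<n. X i x - X i (pos_part (x - c i))) \<le> 1"
        using feas unfolding gccp_feasible_def by auto
    qed (use g_nn in auto)
    then have "(\<Sum>i<n. integral {0..t} (\<lambda>x. X i x - X i (pos_part (x - c i)))) \<le> t"
      using t by simp
    then show ?thesis using tp
      by (simp add: xbar_def sum_divide_distrib[symmetric])
  qed
qed

theorem lemma4p3:
  fixes M :: "'w measure" and n :: nat and c :: "nat \<Rightarrow> real"
    and X :: "nat \<Rightarrow> real \<Rightarrow> real" and \<alpha> :: "nat \<Rightarrow> 'w \<Rightarrow> ereal" and \<tau> :: real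
  assumes "\<forall>i<n. c i > 0"
    and "gccp_feasible n c X"
    and "poisson_rounding M n c X \<alpha>"
    and "\<tau> \<ge> 0"
  shows "prob_space.expectation M (\<lambda>\<omega>. \<Sum>i\<in>{i. i < n \<and> \<alpha> i \<omega> < ereal \<tau>}. c i) \<le> \<tau>"
proof -
  note c = assms(1) and feas = assms(2) and t = assms(4)
  interpret prob_space M using assms(3) unfolding poisson_rounding_def by auto
  have rv: "\<alpha> i \<in> borel_measurable M" if "i < n" for i
    using assms(3) that unfolding poisson_rounding_def indep_vars_def by auto
  have surv: "prob {\<omega>\<in>space M. ereal \<tau> < \<alpha> i \<omega>} = exp (- cum_rate c X i \<tau>)" if "i < n" for i
    using assms(3) that t unfolding poisson_rounding_def by auto
  define A where "A i = {\<omega>\<in>space M. \<alpha> i \<omega> < ereal \<tau>}" for i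
  have Aev: "A i \<in> events" if "i < n" for i
    unfolding A_def using rv[OF that] by measurable
  have "expectation (\<lambda>\<omega>. \<Sum>i\<in>{i. i < n \<and> \<alpha> i \<omega> < ereal \<tau>}. c i)
      = expectation (\<lambda>\<omega>. \<Sum>i<n. c i * indicator (A i) \<omega>)"
  proof (rule Bochner_Integration.integral_cong[OF refl])
    fix \<omega> assume w: "\<omega> \<in> space M"
    have "{i. i < n \<and> \<alpha> i \<omega> < ereal \<tau>} = {..<n} \<inter> {i. \<alpha> i \<omega> < ereal \<tau>}" by auto
    then show "(\<Sum>i\<in>{i. i < n \<and> \<alpha> i \<omega> < ereal \<tau>}. c i) = (\<Sum>i<n. c i * indicator (A i) \<omega>)"
      using w by (simp add: sum.inter_restrict A_def indicator_def)
  qed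
  also have "\<dots> = (\<Sum>i<n. c i * prob (A i))"
  proof (subst Bochner_Integration.integral_sum)
    show "\<And>i. i \<in> {..<n} \<Longrightarrow> integrable M (\<lambda>\<omega>. c i * indicator (A i) \<omega>)"
      using Aev by (intro integrable_mult_right integrable_real_indicator) (auto simp: emeasure_eq_measure)
    show "(\<Sum>i<n. expectation (\<lambda>\<omega>. c i * indicator (A i) \<omega>)) = (\<Sum>i<n. c i * prob (A i))"
      using Aev by (intro sum.cong refl) simp
  qed
  also have "\<dots> \<le> (\<Sum>i<n. c i * cum_rate c X i \<tau>)"
  proof (rule sum_mono)
    fix i assume "i \<in> {..<n}"
    then have i: "i < n" by simp
    have B: "{\<omega>\<in>space M. ereal \<tau> < \<alpha> i \<omega>} \<in> events" using rv[OF i] by measurable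
    have "A i \<subseteq> space M - {\<omega>\<in>space M. ereal \<tau> < \<alpha> i \<omega>}" unfolding A_def by auto
    then have "prob (A i) \<le> prob (space M - {\<omega>\<in>space M. ereal \<tau> < \<alpha> i \<omega>})"
      using B by (intro finite_measure_mono) auto
    also have "\<dots> = 1 - exp (- cum_rate c X i \<tau>)" using prob_compl[OF B] surv[OF i] by simp
    also have "\<dots> \<le> cum_rate c X i \<tau>" using exp_ge_add_one_self[of "- cum_rate c X i \<tau>"] by simp
    finally show "c i * prob (A i) \<le> c i * cum_rate c X i \<tau>"
      using c i by (intro mult_left_mono) auto
  qed
  also have "\<dots> = (\<Sum>i<n. integral {0..\<tau>} (\<lambda>s. xbar c X i (s / 2)))"
  proof (rule sum.cong[OF refl])
    fix i assume "i \<in> {..<n}"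
    then have "c i > 0" using c by auto
    have "cum_rate c X i \<tau> = integral {0..\<tau>} (\<lambda>s. (1 / c i) *\<^sub>R xbar c X i (s / 2))"
      by (simp add: cum_rate_def)
    also have "\<dots> = (1 / c i) * integral {0..\<tau>} (\<lambda>s. xbar c X i (s / 2))"
      by (subst integral_cmul) simp
    finally show "c i * cum_rate c X i \<tau> = integral {0..\<tau>} (\<lambda>s. xbar c X i (s / 2))"
      using \<open>c i > 0\<close> by simp
  qed
  also have "\<dots> \<le> integral {0..\<tau>} (\<lambda>s. 1)"
  proof (rule sum_integral_le)
    fix i s assume "i \<in> {..<n}" "s \<in> {0..\<tau>}"
    then show "0 \<le> xbar c X i (s / 2)" using xbar_props(1)[OF c feas, of "s/2"] by auto
  next
    fix s assume "s \<in> {0..\<tau>}"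
    then show "(\<Sum>i<n. xbar c X i (s / 2)) \<le> 1" using xbar_props(2)[OF c feas, of "s/2"] by auto
  qed auto
  also have "\<dots> = \<tau>" using t by simp
  finally show ?thesis .
qed

end
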